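(* There is a computable coloring $c:\mathcal{P}_{fin}(\mathbb{N})\rightarrow\{0,1\}$ such that for every computably enumerable $\mathcal{S}\subseteq\mathcal{P}_{fin}(\mathbb{N})$ which contains infinitely many pairwise disjoint elements, $c$ is not constant on $NU(\mathcal{S})$.
   Context: $\mathcal{P}_{fin}(\mathbb{N})$ is the set of finite subsets of $\mathbb{N}$, identified with $\mathbb{N}$ via a fixed computable bijection (e.g. a finite set corresponds to the number whose binary expansion has 1s exactly at its elements); computability and computable enumerability of subsets of and functions on $\mathcal{P}_{fin}(\mathbb{N})$ are with respect to this identification. For $\mathcal{S}\subseteq\mathcal{P}_{fin}(\mathbb{N})$, $NU(\mathcal{S})$ denotes the set of non-empty sets which are unions of finitely many elements of $\mathcal{S}$. *)

theory Defs
  imports Main "HOL-Library.Nat_Bijection"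
begin

text \<open>A function of arity n is only ever
evaluated on argument lists of length n.\<close>

inductive recfn :: "nat \<Rightarrow> (nat list \<Rightarrow> nat) \<Rightarrow> bool" where
  rf_zero: "recfn n (\<lambda>_. 0)"
| rf_succ: "recfn 1 (\<lambda>xs. Suc (hd xs))"
| rf_proj: "i < n \<Longrightarrow> recfn n (\<lambda>xs. xs ! i)"
| rf_comp: "recfn m g \<Longrightarrow> length fs = m \<Longrightarrow> (\<forall>f \<in> set fs. recfn n f) \<Longrightarrow>
            recfn n (\<lambda>xs. g (map (\<lambda>f. f xs) fs))"
| rf_prim: "recfn n g \<Longrightarrow> recfn (Suc (Suc n)) h \<Longrightarrow>
            recfn (Suc n) (\<lambda>xs. rec_nat (g (tl xs)) (\<lambda>k r. h (k # r # tl xs)) (hd xs))"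
| rf_mu: "recfn (Suc n) g \<Longrightarrow> (\<forall>xs. length xs = n \<longrightarrow> (\<exists>y. g (y # xs) = 0)) \<Longrightarrow>
          recfn n (\<lambda>xs. LEAST y. g (y # xs) = 0)"

definition computable :: "(nat \<Rightarrow> nat) \<Rightarrow> bool" where
  "computable f \<longleftrightarrow> (\<exists>g. recfn 1 g \<and> (\<forall>x. f x = g [x]))"

definition ce :: "nat set \<Rightarrow> bool" where
  "ce A \<longleftrightarrow> (\<exists>g. recfn 2 g \<and> A = {x. \<exists>y. g [x, y] = 0})"

text \<open>Finite subsets of N are coded by naturals via binary expansion:
set_encode / set_decode from Nat_Bijection.  NU(S): nonempty finite unions.\<close>
definition NU :: "nat set set \<Rightarrow> nat set set" where
  "NU S = {A. A \<noteq> {} \<and> (\<exists>F. finite F \<and> F \<subseteq> S \<and> A = \<Union>F)}"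

end

theory Submission
  imports Defs
begin


definition rf :: "nat \<Rightarrow> (nat list \<Rightarrow> nat) \<Rightarrow> bool" where
  "rf n f \<longleftrightarrow> (\<exists>g. recfn n g \<and> (\<forall>xs. length xs = n \<longrightarrow> f xs = g xs))"

lemma rf_cong: "rf n f \<Longrightarrow> (\<And>xs. length xs = n \<Longrightarrow> f xs = g xs) \<Longrightarrow> rf n g"
  unfolding rf_def by metis

lemma recfn_rf: "recfn n f \<Longrightarrow> rf n f"
  unfolding rf_def by blast

lemma rf_zero: "rf n (\<lambda>_. 0)" by (rule recfn_rf, rule rf_zero)
lemma rf_succ: "rf 1 (\<lambda>xs. Suc (hd xs))" by (rule recfn_rf, rule rf_succ)
lemma rf_proj: "i < n \<Longrightarrow> rf n (\<lambda>xs. xs ! i)" by (rule recfn_rf, rule rf_proj)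

lemma rf_comp:
  assumes g: "rf m g" and len: "length fs = m" and fs: "\<forall>f\<in>set fs. rf n f"
  shows "rf n (\<lambda>xs. g (map (\<lambda>f. f xs) fs))"
proof -
  from g obtain g' where g': "recfn m g'" "\<forall>xs. length xs = m \<longrightarrow> g xs = g' xs"
    unfolding rf_def by blast
  from fs have "\<forall>f\<in>set fs. \<exists>h. recfn n h \<and> (\<forall>xs. length xs = n \<longrightarrow> f xs = h xs)"
    unfolding rf_def by blast
  then obtain R where R: "\<forall>f\<in>set fs. recfn n (R f) \<and> (\<forall>xs. length xs = n \<longrightarrow> f xs = R f xs)"
    by metis
  have "recfn n (\<lambda>xs. g' (map (\<lambda>f. f xs) (map R fs)))"
    by (rule recfn.rf_comp[OF g'(1)]) (use len R in auto)
  moreover have "length xs = n \<Longrightarrow> g (map (\<lambda>f. f xs) fs) = g' (map (\<lambda>f. f xs) (map R fs))" for xs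
  proof -
    assume l: "length xs = n"
    have "map (\<lambda>f. f xs) fs = map (\<lambda>f. f xs) (map R fs)"
      unfolding map_map comp_def using R l by (auto intro!: map_cong)
    moreover have "g (map (\<lambda>f. f xs) fs) = g' (map (\<lambda>f. f xs) fs)"
      using g'(2) len by simp
    ultimately show ?thesis by metis
  qed
  ultimately show ?thesis unfolding rf_def by blast
qed

lemma rf_prim:
  assumes g: "rf n g" and h: "rf (Suc (Suc n)) h"
  shows "rf (Suc n) (\<lambda>xs. rec_nat (g (tl xs)) (\<lambda>k r. h (k # r # tl xs)) (hd xs))"
proof -
  from g obtain g' where g': "recfn n g'" "\<forall>xs. length xs = n \<longrightarrow> g xs = g' xs"
    unfolding rf_def by blast
  from h obtain h' where h': "recfn (Suc (Suc n)) h'" "\<forall>xs. length xs = Suc (Suc n) \<longrightarrow> h xs = h' xs"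
    unfolding rf_def by blast
  have "recfn (Suc n) (\<lambda>xs. rec_nat (g' (tl xs)) (\<lambda>k r. h' (k # r # tl xs)) (hd xs))"
    by (rule recfn.rf_prim[OF g'(1) h'(1)])
  moreover have "length xs = Suc n \<Longrightarrow> rec_nat (g (tl xs)) (\<lambda>k r. h (k # r # tl xs)) (hd xs)
      = rec_nat (g' (tl xs)) (\<lambda>k r. h' (k # r # tl xs)) (hd xs)" for xs
    using g'(2) h'(2) by simp
  ultimately show ?thesis unfolding rf_def by (intro exI[of _ "(\<lambda>xs. rec_nat (g' (tl xs)) (\<lambda>k r. h' (k # r # tl xs)) (hd xs))"]) auto
qed

lemma rf_mu:
  assumes g: "rf (Suc n) g" and tot: "\<forall>xs. length xs = n \<longrightarrow> (\<exists>y. g (y # xs) = 0)"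
  shows "rf n (\<lambda>xs. LEAST y. g (y # xs) = 0)"
proof -
  from g obtain g' where g': "recfn (Suc n) g'" "\<forall>xs. length xs = Suc n \<longrightarrow> g xs = g' xs"
    unfolding rf_def by blast
  have "recfn n (\<lambda>xs. LEAST y. g' (y # xs) = 0)"
    by (rule recfn.rf_mu[OF g'(1)]) (use tot g'(2) in auto)
  moreover have "length xs = n \<Longrightarrow> (LEAST y. g (y # xs) = 0) = (LEAST y. g' (y # xs) = 0)" for xs
    using g'(2) by simp
  ultimately show ?thesis unfolding rf_def by (intro exI[of _ "\<lambda>xs. LEAST y. g' (y # xs) = 0"]) auto
qed

lemma rf_comp1: "rf 1 g \<Longrightarrow> rf n f \<Longrightarrow> rf n (\<lambda>xs. g [f xs])"
  using rf_comp[of 1 g "[f]" n] by simp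

lemma rf_comp2: "rf 2 g \<Longrightarrow> rf n f1 \<Longrightarrow> rf n f2 \<Longrightarrow> rf n (\<lambda>xs. g [f1 xs, f2 xs])"
  using rf_comp[of 2 g "[f1,f2]" n] by simp

lemma rf_comp3: "rf 3 g \<Longrightarrow> rf n f1 \<Longrightarrow> rf n f2 \<Longrightarrow> rf n f3 \<Longrightarrow> rf n (\<lambda>xs. g [f1 xs, f2 xs, f3 xs])"
  using rf_comp[of 3 g "[f1,f2,f3]" n] by (simp add: numeral_3_eq_3)

lemma rf_Suc: "rf n f \<Longrightarrow> rf n (\<lambda>xs. Suc (f xs))"
  using rf_comp1[OF rf_succ] by simp

lemma rf_const: "rf n (\<lambda>_. c)"
  by (induction c) (auto intro: rf_zero dest: rf_Suc)

lemma rf_prim2: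
  assumes g: "rf 1 (\<lambda>xs. g (xs!0))" and h: "rf 3 (\<lambda>xs. h (xs!0) (xs!1) (xs!2))"
  shows "rf 2 (\<lambda>xs. rec_nat (g (xs!1)) (\<lambda>k r. h k r (xs!1)) (xs!0))"
proof -
  have "rf (Suc 1) (\<lambda>xs. rec_nat ((\<lambda>xs. g (xs!0)) (tl xs)) (\<lambda>k r. (\<lambda>xs. h (xs!0) (xs!1) (xs!2)) (k # r # tl xs)) (hd xs))"
    by (rule rf_prim[OF g]) (use h in \<open>simp add: numeral_3_eq_3\<close>)
  then have "rf 2 (\<lambda>xs. rec_nat (g (tl xs ! 0)) (\<lambda>k r. h k r (tl xs ! 0)) (hd xs))"
    by (simp add: numeral_2_eq_2)
  then show ?thesis
    by (rule rf_cong) (auto simp: length_Suc_conv numeral_2_eq_2)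
qed


definition cf :: "(nat \<Rightarrow> nat) \<Rightarrow> bool" where
  "cf f \<longleftrightarrow> rf 1 (\<lambda>xs. f (hd xs))"

definition cp :: "(nat \<Rightarrow> bool) \<Rightarrow> bool" where
  "cp P \<longleftrightarrow> cf (\<lambda>x. if P x then 1 else 0)"

definition rf2 :: "(nat \<Rightarrow> nat \<Rightarrow> nat) \<Rightarrow> bool" where
  "rf2 h \<longleftrightarrow> rf 2 (\<lambda>xs. h (xs!0) (xs!1))"

lemma rf_prf: "cf f \<Longrightarrow> rf n F \<Longrightarrow> rf n (\<lambda>xs. f (F xs))"
  unfolding cf_def using rf_comp1[of "\<lambda>xs. f (hd xs)" n F] by simp

lemma rf_rf2: "rf2 h \<Longrightarrow> rf n F \<Longrightarrow> rf n G \<Longrightarrow> rf n (\<lambda>xs. h (F xs) (G xs))"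
  unfolding rf2_def using rf_comp2[of "\<lambda>xs. h (xs!0) (xs!1)" n F G] by simp

lemma rf1_hd: "rf 1 (\<lambda>xs. f (xs!0)) \<Longrightarrow> cf f"
  unfolding cf_def by (erule rf_cong) (auto simp: length_Suc_conv)

lemma cf_rf1: "cf f \<Longrightarrow> rf 1 (\<lambda>xs. f (xs!0))"
  unfolding cf_def by (erule rf_cong) (auto simp: length_Suc_conv)

lemma cf_hd: "rf 1 hd"
  by (rule rf_cong[OF rf_proj[of 0 1]]) (auto simp: length_Suc_conv)

lemma cf_id: "cf (\<lambda>x. x)"
  unfolding cf_def using cf_hd by simp

lemma cf_const: "cf (\<lambda>x. c)"
  unfolding cf_def by (rule rf_const)

lemma cf_rf2: "rf2 h \<Longrightarrow> cf f \<Longrightarrow> cf g \<Longrightarrow> cf (\<lambda>x. h (f x) (g x))"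
  unfolding cf_def by (rule rf_rf2)

lemma cf_compose: "cf f \<Longrightarrow> cf g \<Longrightarrow> cf (\<lambda>x. f (g x))"
  unfolding cf_def by (rule rf_prf[unfolded cf_def])

lemma rf_Suc1: "rf n F \<Longrightarrow> rf n (\<lambda>xs. Suc (F xs))" by (rule rf_Suc)

lemma cf_Suc: "cf f \<Longrightarrow> cf (\<lambda>x. Suc (f x))"
  unfolding cf_def by (rule rf_Suc)

subsection \<open>Arithmetic\<close>

lemma rec_add: "rec_nat b (\<lambda>k r. Suc r) a = a + b" by (induction a) auto

lemma rf2_add: "rf2 (+)"
proof -
  have "rf 2 (\<lambda>xs. rec_nat ((\<lambda>x. x) (xs!1)) (\<lambda>k r. (\<lambda>k r p. Suc r) k r (xs!1)) (xs!0))"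
    by (rule rf_prim2) (intro rf_Suc rf_proj| simp)+
  then show ?thesis unfolding rf2_def by (rule rf_cong) (simp add: rec_add)
qed

lemma rec_pred: "rec_nat 0 (\<lambda>k r. k) a = a - 1" by (cases a) auto

lemma cf_pred: "cf (\<lambda>x. x - 1)"
proof -
  have "rf (Suc 0) (\<lambda>xs. rec_nat ((\<lambda>_. 0) (tl xs)) (\<lambda>k r. (\<lambda>xs. xs!0) (k # r # tl xs)) (hd xs))"
    by (rule rf_prim) (intro rf_zero rf_proj| simp)+
  then have "rf 1 (\<lambda>xs. rec_nat 0 (\<lambda>k r. k) (hd xs))" by simp
  then show ?thesis unfolding cf_def by (rule rf_cong) (simp add: rec_pred)
qed

lemma rec_sub: "rec_nat b (\<lambda>k r. r - 1) a = b - a" by (induction a) auto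

lemma rf2_sub: "rf2 (-)"
proof -
  have "rf 2 (\<lambda>xs. rec_nat ((\<lambda>x. x) (xs!1)) (\<lambda>k r. (\<lambda>k r p. r - 1) k r (xs!1)) (xs!0))"
    by (rule rf_prim2) (intro rf_prf[OF cf_pred] rf_proj| simp)+
  then have "rf 2 (\<lambda>xs. xs!1 - xs!0)" by (rule rf_cong) (simp add: rec_sub[simplified])
  then have "rf 2 (\<lambda>xs. (\<lambda>xs. xs!1 - xs!0) [xs!1, xs!0])"
    by (intro rf_comp2) (auto intro: rf_proj)
  then show ?thesis unfolding rf2_def by simp
qed

lemma rec_mult: "rec_nat 0 (\<lambda>k r. r + b) a = a * b" by (induction a) auto

lemma rf2_mult: "rf2 (*)"
proof -
  have "rf 2 (\<lambda>xs. rec_nat ((\<lambda>x. 0) (xs!1)) (\<lambda>k r. (\<lambda>k r p. r + p) k r (xs!1)) (xs!0))"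
    by (rule rf_prim2) (intro rf_zero rf_rf2[OF rf2_add] rf_proj| simp)+
  then show ?thesis unfolding rf2_def by (rule rf_cong) (simp add: rec_mult)
qed

lemma cf_add: "cf f \<Longrightarrow> cf g \<Longrightarrow> cf (\<lambda>x. f x + g x)"
  by (rule cf_rf2[OF rf2_add])
lemma cf_sub: "cf f \<Longrightarrow> cf g \<Longrightarrow> cf (\<lambda>x. f x - g x)"
  by (rule cf_rf2[OF rf2_sub])
lemma cf_mult: "cf f \<Longrightarrow> cf g \<Longrightarrow> cf (\<lambda>x. f x * g x)"
  by (rule cf_rf2[OF rf2_mult])

lemma rec_tri: "rec_nat 0 (\<lambda>k r. r + Suc k) n = triangle n" by (induction n) auto

lemma cf_triangle: "cf triangle"
proof -
  have "rf (Suc 0) (\<lambda>xs. rec_nat ((\<lambda>_. 0) (tl xs)) (\<lambda>k r. (\<lambda>xs. xs!1 + Suc (xs!0)) (k # r # tl xs)) (hd xs))"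
    by (rule rf_prim) (intro rf_zero rf_rf2[OF rf2_add] rf_proj rf_Suc| simp)+
  then have "rf 1 (\<lambda>xs. rec_nat 0 (\<lambda>k r. r + Suc k) (hd xs))" by simp
  then show ?thesis unfolding cf_def by (rule rf_cong) (simp add: rec_tri[simplified])
qed

lemma cf_mu:
  assumes g: "cf (\<lambda>z. g (fst (prod_decode z)) (snd (prod_decode z)))"
    and tot: "\<forall>x. \<exists>y. g y x = 0"
    and pe: "rf2 (\<lambda>a b. prod_encode (a, b))"
  shows "cf (\<lambda>x. LEAST y. g y x = 0)"
proof -
  have "rf 2 (\<lambda>xs. (\<lambda>z. g (fst (prod_decode z)) (snd (prod_decode z))) (prod_encode (xs!0, xs!1)))"
    by (rule rf_prf[OF g]) (rule rf_rf2[OF pe]; rule rf_proj; simp)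
  then have "rf (Suc 1) (\<lambda>xs. g (xs!0) (xs!1))" by (simp add: numeral_2_eq_2)
  then have "rf 1 (\<lambda>xs. LEAST y. (\<lambda>xs. g (xs!0) (xs!1)) (y # xs) = 0)"
    by (rule rf_mu) (use tot in auto)
  then show ?thesis unfolding cf_def by (rule rf_cong) (auto simp: length_Suc_conv)
qed


definition pe :: "nat \<Rightarrow> nat \<Rightarrow> nat" where "pe a b = prod_encode (a, b)"
definition pfst :: "nat \<Rightarrow> nat" where "pfst z = fst (prod_decode z)"
definition psnd :: "nat \<Rightarrow> nat" where "psnd z = snd (prod_decode z)"

lemma pfst_pe[simp]: "pfst (pe a b) = a" by (simp add: pfst_def pe_def)
lemma psnd_pe[simp]: "psnd (pe a b) = b" by (simp add: psnd_def pe_def)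
lemma pe_split[simp]: "pe (pfst z) (psnd z) = z" by (simp add: pfst_def psnd_def pe_def)
lemma pe_eq[simp]: "pe a b = pe c d \<longleftrightarrow> a = c \<and> b = d" by (simp add: pe_def)
lemma pe_ge1: "a \<le> pe a b" by (simp add: pe_def le_prod_encode_1)
lemma pe_ge2: "b \<le> pe a b" by (simp add: pe_def le_prod_encode_2)

lemma rf2_pe: "rf2 pe"
proof -
  have "rf 2 (\<lambda>xs. triangle (xs!0 + xs!1) + xs!0)"
    by (intro rf_rf2[OF rf2_add] rf_prf[OF cf_triangle] rf_proj | simp)+
  then show ?thesis unfolding rf2_def by (rule rf_cong) (simp add: pe_def prod_encode_def)
qed

lemma triangle_mono: "s \<le> t \<Longrightarrow> triangle s \<le> triangle t"
  by (induction t) (auto simp: le_Suc_eq)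

lemma sz_eq: "(LEAST s. Suc z - triangle (Suc s) = 0) = pfst z + psnd z"
proof -
  obtain a b where ab: "z = pe a b" by (metis pe_split)
  have z: "z = triangle (a + b) + a" using ab by (simp add: pe_def prod_encode_def)
  show ?thesis
  proof (rule Least_equality)
    show "Suc z - triangle (Suc (pfst z + psnd z)) = 0" using ab z by simp
  next
    fix s assume "Suc z - triangle (Suc s) = 0"
    then have "Suc z \<le> triangle (Suc s)" by simp
    show "pfst z + psnd z \<le> s"
    proof (rule ccontr)
      assume "\<not> ?thesis"
      then have "Suc s \<le> a + b" using ab by simp
      then have "triangle (Suc s) \<le> triangle (a + b)" by (rule triangle_mono)
      with \<open>Suc z \<le> triangle (Suc s)\<close> z show False by simp
    qed
  qed
qed

lemma cf_sz: "cf (\<lambda>z. pfst z + psnd z)"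
proof -
  have "rf (Suc 1) (\<lambda>xs. Suc (xs!1) - triangle (Suc (xs!0)))"
    by (intro rf_rf2[OF rf2_sub] rf_Suc rf_prf[OF cf_triangle] rf_proj | simp)+
  then have "rf 1 (\<lambda>xs. LEAST s. (\<lambda>xs. Suc (xs!1) - triangle (Suc (xs!0))) (s # xs) = 0)"
    apply (rule rf_mu) apply (simp add: Suc_le_eq) apply (metis le_add2) done
  then have "rf 1 (\<lambda>xs. LEAST s. Suc (hd xs) - triangle (Suc s) = 0)"
    by (rule rf_cong) (auto simp: length_Suc_conv)
  then show ?thesis unfolding cf_def sz_eq .
qed

lemma pfst_eq: "pfst z = z - triangle (pfst z + psnd z)"
proof -
  obtain a b where z: "z = pe a b" by (metis pe_split)
  then have "pfst z = a" "psnd z = b" by simp_all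
  moreover have "z = triangle (a + b) + a" using z by (simp add: pe_def prod_encode_def)
  ultimately show ?thesis by simp
qed

lemma psnd_eq: "psnd z = (pfst z + psnd z) - pfst z" by simp

lemma cf_pfst0: "cf pfst"
proof -
  have "cf (\<lambda>z. z - triangle (pfst z + psnd z))"
    by (intro cf_rf2[OF rf2_sub] cf_id cf_compose[OF cf_triangle cf_sz])
  moreover have "(\<lambda>z. z - triangle (pfst z + psnd z)) = pfst" by (rule ext) (rule pfst_eq[symmetric])
  ultimately show ?thesis by simp
qed

lemma cf_psnd0: "cf psnd"
proof -
  have "cf (\<lambda>z. (pfst z + psnd z) - pfst z)"
    by (intro cf_rf2[OF rf2_sub] cf_sz cf_pfst0)
  then show ?thesis by simp
qed

lemma cf_pe[intro]: "cf f \<Longrightarrow> cf g \<Longrightarrow> cf (\<lambda>x. pe (f x) (g x))"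
  by (rule cf_rf2[OF rf2_pe])
lemma cf_pfst[intro]: "cf f \<Longrightarrow> cf (\<lambda>x. pfst (f x))"
  by (rule cf_compose[OF cf_pfst0])
lemma cf_psnd[intro]: "cf f \<Longrightarrow> cf (\<lambda>x. psnd (f x))"
  by (rule cf_compose[OF cf_psnd0])

lemma rf_pe: "rf n F \<Longrightarrow> rf n G \<Longrightarrow> rf n (\<lambda>xs. pe (F xs) (G xs))"
  by (rule rf_rf2[OF rf2_pe])

lemma cf_rf2I: "cf (\<lambda>z. h (pfst z) (psnd z)) \<Longrightarrow> rf2 h"
proof -
  assume "cf (\<lambda>z. h (pfst z) (psnd z))"
  then have "rf 2 (\<lambda>xs. (\<lambda>z. h (pfst z) (psnd z)) (pe (xs!0) (xs!1)))"
    by (rule rf_prf) (intro rf_pe rf_proj; simp)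
  then show ?thesis unfolding rf2_def by simp
qed

lemma cf_rf3I: "cf (\<lambda>z. h (pfst z) (pfst (psnd z)) (psnd (psnd z))) \<Longrightarrow> rf 3 (\<lambda>xs. h (xs!0) (xs!1) (xs!2))"
proof -
  assume "cf (\<lambda>z. h (pfst z) (pfst (psnd z)) (psnd (psnd z)))"
  then have "rf 3 (\<lambda>xs. (\<lambda>z. h (pfst z) (pfst (psnd z)) (psnd (psnd z))) (pe (xs!0) (pe (xs!1) (xs!2))))"
    by (rule rf_prf) (intro rf_pe rf_proj; simp)
  then show ?thesis by simp
qed

lemma cf_rec[intro]:
  assumes b: "cf b" and s: "cf (\<lambda>z. s (pfst z) (pfst (psnd z)) (psnd (psnd z)))" and K: "cf K"
  shows "cf (\<lambda>x. rec_nat (b x) (\<lambda>i r. s i r x) (K x))"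
proof -
  have "rf 2 (\<lambda>xs. rec_nat (b (xs!1)) (\<lambda>k r. s k r (xs!1)) (xs!0))"
    by (rule rf_prim2[OF cf_rf1[OF b] cf_rf3I[OF s]])
  then have "rf2 (\<lambda>k x. rec_nat (b x) (\<lambda>i r. s i r x) k)" unfolding rf2_def .
  from cf_rf2[OF this K cf_id] show ?thesis .
qed

lemma cf_mu':
  assumes g: "cf (\<lambda>z. g (pfst z) (psnd z))" and tot: "\<forall>x. \<exists>y. g y x = 0"
  shows "cf (\<lambda>x. LEAST y. g y x = 0)"
  using cf_mu[of g] g tot rf2_pe unfolding pfst_def psnd_def pe_def by simp

lemma cf_eqI: "cf f \<Longrightarrow> (\<And>x. f x = g x) \<Longrightarrow> cf g"
proof -
  assume "cf f" "\<And>x. f x = g x"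
  then have "f = g" by (simp add: ext)
  with \<open>cf f\<close> show ?thesis by simp
qed

lemma cf_if[intro]: "cp P \<Longrightarrow> cf f \<Longrightarrow> cf g \<Longrightarrow> cf (\<lambda>x. if P x then f x else g x)"
proof -
  assume P: "cp P" and f: "cf f" and g: "cf g"
  have "cf (\<lambda>x. (if P x then 1 else 0) * f x + (1 - (if P x then 1 else 0)) * g x)"
    using P f g unfolding cp_def by (intro cf_add cf_mult cf_sub cf_const)
  then show ?thesis unfolding cp_def by (rule cf_eqI) auto
qed

lemma cp_cf: "cp P \<Longrightarrow> cf (\<lambda>x. if P x then 1 else 0)" unfolding cp_def .

lemma cp_eq[intro]: "cf f \<Longrightarrow> cf g \<Longrightarrow> cp (\<lambda>x. f x = g x)"
proof -
  assume f: "cf f" and g: "cf g"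
  have "cf (\<lambda>x. 1 - ((f x - g x) + (g x - f x)))"
    using f g by (intro cf_add cf_sub cf_const)
  moreover have "(1 - ((f x - g x) + (g x - f x))) = (if f x = g x then 1 else 0)" for x by auto
  ultimately show ?thesis unfolding cp_def by simp
qed

lemma cp_less[intro]: "cf f \<Longrightarrow> cf g \<Longrightarrow> cp (\<lambda>x. f x < g x)"
proof -
  assume f: "cf f" and g: "cf g"
  have "cf (\<lambda>x. 1 - (1 - (g x - f x)))"
    using f g by (intro cf_sub cf_const)
  moreover have "(1 - (1 - (g x - f x))) = (if f x < g x then 1 else 0)" for x by auto
  ultimately show ?thesis unfolding cp_def by simp
qed

lemma cp_not[intro]: "cp P \<Longrightarrow> cp (\<lambda>x. \<not> P x)"
proof -
  assume P: "cp P"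
  have "cf (\<lambda>x. 1 - (if P x then 1 else 0))" using P unfolding cp_def by (intro cf_sub cf_const)
  then show ?thesis unfolding cp_def by (rule cf_eqI) auto
qed

lemma cp_and[intro]: "cp P \<Longrightarrow> cp Q \<Longrightarrow> cp (\<lambda>x. P x \<and> Q x)"
proof -
  assume P: "cp P" and Q: "cp Q"
  have "cf (\<lambda>x. (if P x then 1 else 0) * (if Q x then 1 else 0))" using P Q unfolding cp_def by (intro cf_mult)
  then show ?thesis unfolding cp_def by (rule cf_eqI) auto
qed

lemma cp_or[intro]: "cp P \<Longrightarrow> cp Q \<Longrightarrow> cp (\<lambda>x. P x \<or> Q x)"
proof -
  assume P: "cp P" and Q: "cp Q"
  have "cp (\<lambda>x. \<not> (\<not> P x \<and> \<not> Q x))" using P Q by (intro cp_not cp_and)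
  then show ?thesis by simp
qed

lemma cp_imp[intro]: "cp P \<Longrightarrow> cp Q \<Longrightarrow> cp (\<lambda>x. P x \<longrightarrow> Q x)"
proof -
  assume P: "cp P" and Q: "cp Q"
  have "cp (\<lambda>x. \<not> P x \<or> Q x)" using P Q by (intro cp_not cp_or)
  then show ?thesis by simp
qed

lemma cp_le[intro]: "cf f \<Longrightarrow> cf g \<Longrightarrow> cp (\<lambda>x. f x \<le> g x)"
proof -
  assume f: "cf f" and g: "cf g"
  have "cp (\<lambda>x. \<not> g x < f x)" using f g by (intro cp_not cp_less)
  then show ?thesis by (simp add: not_less)
qed

lemma cp_neq[intro]: "cf f \<Longrightarrow> cf g \<Longrightarrow> cp (\<lambda>x. f x \<noteq> g x)"
  by (intro cp_not cp_eq)

lemma cp_True[intro]: "cp (\<lambda>x. True)" unfolding cp_def by (simp add: cf_const)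
lemma cp_False[intro]: "cp (\<lambda>x. False)" unfolding cp_def by (simp add: cf_const)

lemma cf_least[intro]:
  assumes P: "cp (\<lambda>z. P (pfst z) (psnd z))" and B: "cf B"
  shows "cf (\<lambda>x. LEAST j. j = B x \<or> P j x)"
proof -
  have "cf (\<lambda>z. if pfst z = B (psnd z) \<or> P (pfst z) (psnd z) then 0 else 1)"
    using P B by (intro cf_if cp_or cp_eq cf_pfst cf_id cf_compose[OF B] cf_psnd cf_const)
  then have "cf (\<lambda>x. LEAST y. (if y = B x \<or> P y x then 0 else 1) = (0::nat))"
    by (rule cf_mu'[where g="\<lambda>y x. if y = B x \<or> P y x then 0 else 1"]) auto
  then show ?thesis by (rule cf_eqI) simp
qed

lemma ex_least: "(\<exists>j<(B::nat). P j) \<longleftrightarrow> (LEAST j. j = B \<or> P j) < B"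
proof
  assume "\<exists>j<B. P j"
  then obtain j where "j < B" "P j" by blast
  have "(LEAST j. j = B \<or> P j) \<le> j" by (rule Least_le) (simp add: \<open>P j\<close>)
  then show "(LEAST j. j = B \<or> P j) < B" using \<open>j < B\<close> by simp
next
  assume a: "(LEAST j. j = B \<or> P j) < B"
  have "(LEAST j. j = B \<or> P j) = B \<or> P (LEAST j. j = B \<or> P j)"
    by (rule LeastI[of _ B]) simp
  with a show "\<exists>j<B. P j" by auto
qed

lemma cp_ex[intro]:
  assumes P: "cp (\<lambda>z. P (pfst z) (psnd z))" and B: "cf B"
  shows "cp (\<lambda>x. \<exists>j<B x. P j x)"
proof -
  have "cp (\<lambda>x. (LEAST j. j = B x \<or> P j x) < B x)"
    using P B by (intro cp_less cf_least)
  then show ?thesis by (simp add: ex_least)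
qed

lemma cp_all[intro]:
  assumes P: "cp (\<lambda>z. P (pfst z) (psnd z))" and B: "cf B"
  shows "cp (\<lambda>x. \<forall>j<B x. P j x)"
proof -
  have "cp (\<lambda>x. \<not> (\<exists>j<B x. \<not> P j x))"
    using P B by (intro cp_not cp_ex) auto
  then show ?thesis by simp
qed

lemmas cf_basic[intro] = cf_id cf_const cf_add cf_sub cf_mult cf_Suc

lemma cf_funpow[intro]: "cf f \<Longrightarrow> cf K \<Longrightarrow> cf A \<Longrightarrow> cf (\<lambda>x. (f ^^ K x) (A x))"
proof -
  assume f: "cf f" and K: "cf K" and A: "cf A"
  have s: "cf (\<lambda>z. f (pfst (psnd z)))" by (rule cf_compose[OF f]) (intro cf_pfst cf_psnd cf_id)
  have "cf (\<lambda>x. rec_nat (A x) (\<lambda>i r. f r) (K x))"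
    by (rule cf_rec[OF A _ K]) (simp add: s)
  moreover have "rec_nat a (\<lambda>i r. f r) k = (f ^^ k) a" for a k by (induction k) auto
  ultimately show ?thesis by simp
qed


inductive Ev :: "nat \<Rightarrow> nat \<Rightarrow> nat \<Rightarrow> bool" where
  ev_zero: "Ev (pe 0 p) n 0"
| ev_succ: "Ev (pe 1 p) n (Suc n)"
| ev_pred: "Ev (pe 2 p) n (n - 1)"
| ev_fst: "Ev (pe 3 p) n (pfst n)"
| ev_snd: "Ev (pe 4 p) n (psnd n)"
| ev_pair: "Ev f n a \<Longrightarrow> Ev g n b \<Longrightarrow> Ev (pe 5 (pe f g)) n (pe a b)"
| ev_comp: "Ev g n a \<Longrightarrow> Ev f a b \<Longrightarrow> Ev (pe 6 (pe f g)) n b"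
| ev_prec0: "Ev f a v \<Longrightarrow> Ev (pe 7 (pe f g)) (pe a 0) v"
| ev_precS: "Ev (pe 7 (pe f g)) (pe a k) r \<Longrightarrow> Ev g (pe a (pe k r)) v \<Longrightarrow> Ev (pe 7 (pe f g)) (pe a (Suc k)) v"
| ev_find: "Ev f (pe n v) 0 \<Longrightarrow> (\<forall>y<v. \<exists>w. w \<noteq> 0 \<and> Ev f (pe n y) w) \<Longrightarrow> Ev (pe 8 f) n v"

lemma Ev_det: "Ev c n v \<Longrightarrow> Ev c n v' \<Longrightarrow> v = v'"
proof (induction arbitrary: v' rule: Ev.induct)
  case (ev_find f n v)
  from ev_find.prems have A: "Ev f (pe n v') 0" and B: "\<forall>y<v'. \<exists>w. w \<noteq> 0 \<and> Ev f (pe n y) w"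
    by (auto elim: Ev.cases)
  show ?case
  proof (rule linorder_cases[of v v'])
    assume "v < v'"
    with B obtain w where "w \<noteq> 0" "Ev f (pe n v) w" by blast
    with ev_find.IH(1) show ?thesis by auto
  next
    assume "v' < v"
    with ev_find.IH(2) obtain w where "w \<noteq> 0" "\<forall>w'. Ev f (pe n v') w' \<longrightarrow> w = w'" by blast
    with A show ?thesis by auto
  qed
next
  case (ev_precS f g a k r v)
  from ev_precS.prems obtain r' where "Ev (pe 7 (pe f g)) (pe a k) r'" "Ev g (pe a (pe k r')) v'"
    by (cases rule: Ev.cases) auto
  with ev_precS.IH show ?case by auto
next
  case (ev_prec0 f a v g)
  from ev_prec0.prems have "Ev f a v'" by (cases rule: Ev.cases) auto
  with ev_prec0.IH show ?case by auto
next
  case (ev_comp g n a f b)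
  from ev_comp.prems obtain a' where "Ev g n a'" "Ev f a' v'" by (cases rule: Ev.cases) auto
  with ev_comp.IH show ?case by auto
next
  case (ev_pair f n a g b)
  from ev_pair.prems obtain a' b' where "Ev f n a'" "Ev g n b'" "v' = pe a' b'" by (cases rule: Ev.cases) auto
  with ev_pair.IH show ?case by auto
qed (auto elim: Ev.cases)

definition "cZ = pe 0 0"
definition "cS = pe 1 0"
definition "cP = pe 2 0"
definition "cL = pe 3 0"
definition "cR = pe 4 0"
definition "cpair f g = pe 5 (pe f g)"
definition "ccomp f g = pe 6 (pe f g)"
definition "cprec f g = pe 7 (pe f g)"
definition "cfind f = pe 8 f"

lemma Ev_Z: "Ev cZ n 0" unfolding cZ_def by (rule ev_zero)
lemma Ev_S: "Ev cS n (Suc n)" unfolding cS_def by (rule ev_succ)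
lemma Ev_P: "Ev cP n (n - 1)" unfolding cP_def by (rule ev_pred)
lemma Ev_L: "Ev cL n (pfst n)" unfolding cL_def by (rule ev_fst)
lemma Ev_R: "Ev cR n (psnd n)" unfolding cR_def by (rule ev_snd)
lemma Ev_pair: "Ev f n a \<Longrightarrow> Ev g n b \<Longrightarrow> Ev (cpair f g) n (pe a b)" unfolding cpair_def by (rule ev_pair)
lemma Ev_comp: "Ev g n a \<Longrightarrow> Ev f a b \<Longrightarrow> Ev (ccomp f g) n b" unfolding ccomp_def by (rule ev_comp)

lemma le_cons: "list_encode (x # xs) = Suc (pe x (list_encode xs))" by (simp add: pe_def)

definition "cHD = ccomp cL cP"
definition "cTL = ccomp cR cP"
definition "ccons a b = ccomp cS (cpair a b)"
definition "cID = ccomp cP cS"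

lemma Ev_HD: "Ev cHD (list_encode (x # xs)) x"
  unfolding cHD_def le_cons by (rule Ev_comp[OF Ev_P]) (metis Ev_L diff_Suc_1 pfst_pe)
lemma Ev_TL: "Ev cTL (list_encode (x # xs)) (list_encode xs)"
  unfolding cTL_def le_cons by (rule Ev_comp[OF Ev_P]) (metis Ev_R diff_Suc_1 psnd_pe)
lemma Ev_cons: "Ev a n x \<Longrightarrow> Ev b n (list_encode l) \<Longrightarrow> Ev (ccons a b) n (list_encode (x # l))"
  unfolding ccons_def le_cons by (rule Ev_comp[OF Ev_pair]) (auto intro: Ev_S)
lemma Ev_ID: "Ev cID n n"
  unfolding cID_def by (rule Ev_comp[OF Ev_S]) (metis Ev_P diff_Suc_1)

definition "citer i = ((\<lambda>c. ccomp cTL c) ^^ i) cID"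

lemma Ev_iter: "i \<le> length xs \<Longrightarrow> Ev (citer i) (list_encode xs) (list_encode (drop i xs))"
proof (induction i)
  case 0 then show ?case by (simp add: citer_def Ev_ID)
next
  case (Suc i)
  then have IH: "Ev (citer i) (list_encode xs) (list_encode (drop i xs))" by simp
  from Suc.prems obtain y ys where "drop i xs = y # ys" "drop (Suc i) xs = ys"
    by (metis Cons_nth_drop_Suc Suc_le_eq)
  then have "Ev cTL (list_encode (drop i xs)) (list_encode (drop (Suc i) xs))"
    using Ev_TL by metis
  from Ev_comp[OF IH this] show ?case unfolding citer_def by simp
qed

definition "cproj i = ccomp cHD (citer i)"

lemma Ev_proj: "i < length xs \<Longrightarrow> Ev (cproj i) (list_encode xs) (xs ! i)"
  unfolding cproj_def
  by (rule Ev_comp[OF Ev_iter]) (simp, metis Cons_nth_drop_Suc Ev_HD)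

fun clst :: "nat list \<Rightarrow> nat" where
  "clst [] = cZ"
| "clst (c # cs) = ccons c (clst cs)"

lemma Ev_lst: "\<forall>f\<in>set fs. Ev (C f) n (f x) \<Longrightarrow> Ev (clst (map C fs)) n (list_encode (map (\<lambda>f. f x) fs))"
  by (induction fs) (auto intro!: Ev_cons simp: Ev_Z simp del: list_encode.simps(2))

lemma compile: "recfn n g \<Longrightarrow> \<exists>c. \<forall>xs. length xs = n \<longrightarrow> Ev c (list_encode xs) (g xs)"
proof (induction rule: recfn.induct)
  case (rf_zero n)
  show ?case by (rule exI[of _ cZ]) (simp add: Ev_Z)
next
  case rf_succ
  show ?case
  proof (rule exI[of _ "ccomp cS cHD"], intro allI impI)
    fix xs :: "nat list" assume "length xs = 1"
    then obtain x where "xs = [x]" by (auto simp: length_Suc_conv)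
    then show "Ev (ccomp cS cHD) (list_encode xs) (Suc (hd xs))"
      by (auto intro!: Ev_comp[OF Ev_HD] Ev_S simp del: list_encode.simps)
  qed
next
  case (rf_proj i n)
  then show ?case by (auto intro!: exI[of _ "cproj i"] Ev_proj)
next
  case (rf_comp m g fs n)
  from rf_comp.IH(1) obtain cg where cg: "\<forall>xs. length xs = m \<longrightarrow> Ev cg (list_encode xs) (g xs)" by blast
  from rf_comp.IH(2) have "\<forall>f\<in>set fs. \<exists>c. \<forall>xs. length xs = n \<longrightarrow> Ev c (list_encode xs) (f xs)" by blast
  then obtain C where C: "\<forall>f\<in>set fs. \<forall>xs. length xs = n \<longrightarrow> Ev (C f) (list_encode xs) (f xs)"
    by metis
  show ?case
  proof (rule exI[of _ "ccomp cg (clst (map C fs))"], intro allI impI)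
    fix xs :: "nat list" assume l: "length xs = n"
    have "Ev (clst (map C fs)) (list_encode xs) (list_encode (map (\<lambda>f. f xs) fs))"
      by (rule Ev_lst) (use C l in auto)
    moreover have "Ev cg (list_encode (map (\<lambda>f. f xs) fs)) (g (map (\<lambda>f. f xs) fs))"
      using cg rf_comp.hyps(2) by simp
    ultimately show "Ev (ccomp cg (clst (map C fs))) (list_encode xs) (g (map (\<lambda>f. f xs) fs))"
      by (rule Ev_comp)
  qed
next
  case (rf_prim n g h)
  from rf_prim.IH(1) obtain cg where cg: "\<forall>xs. length xs = n \<longrightarrow> Ev cg (list_encode xs) (g xs)" by blast
  from rf_prim.IH(2) obtain ch where ch: "\<forall>xs. length xs = Suc (Suc n) \<longrightarrow> Ev ch (list_encode xs) (h xs)" by blast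
  define ch' where "ch' = ccomp ch (ccons (ccomp cL cR) (ccons (ccomp cR cR) cL))"
  have step: "Ev ch' (pe (list_encode t) (pe k r)) (h (k # r # t))" if "length t = n" for t k r
  proof -
    have "Ev (ccons (ccomp cL cR) (ccons (ccomp cR cR) cL)) (pe (list_encode t) (pe k r)) (list_encode (k # r # t))"
      by (intro Ev_cons Ev_comp[OF Ev_R]) (auto intro: Ev_L[of "pe k r", simplified] Ev_R[of "pe k r", simplified] Ev_L[of "pe (list_encode t) (pe k r)", simplified])
    moreover have "Ev ch (list_encode (k # r # t)) (h (k # r # t))" using ch that by (simp del: list_encode.simps)
    ultimately show ?thesis unfolding ch'_def by (rule Ev_comp)
  qed
  have rec: "Ev (cprec cg ch') (pe (list_encode t) k) (rec_nat (g t) (\<lambda>k r. h (k # r # t)) k)" if "length t = n" for t k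
  proof (induction k)
    case 0
    show ?case unfolding cprec_def using cg that by (auto intro: ev_prec0)
  next
    case (Suc k)
    show ?case unfolding cprec_def
      by (simp, rule ev_precS[OF Suc[unfolded cprec_def] step[OF that]])
  qed
  show ?case
  proof (rule exI[of _ "ccomp (cprec cg ch') (cpair cTL cHD)"], intro allI impI)
    fix xs :: "nat list" assume "length xs = Suc n"
    then obtain a t where xs: "xs = a # t" "length t = n" by (auto simp: length_Suc_conv)
    have "Ev (cpair cTL cHD) (list_encode xs) (pe (list_encode t) a)"
      unfolding xs by (intro Ev_pair Ev_TL Ev_HD)
    from Ev_comp[OF this rec[OF xs(2)]]
    show "Ev (ccomp (cprec cg ch') (cpair cTL cHD)) (list_encode xs) (rec_nat (g (tl xs)) (\<lambda>k r. h (k # r # tl xs)) (hd xs))"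
      using xs by simp
  qed
next
  case (rf_mu n g)
  from rf_mu.IH obtain cg where cg: "\<forall>xs. length xs = Suc n \<longrightarrow> Ev cg (list_encode xs) (g xs)" by blast
  define f' where "f' = ccomp cg (ccons cR cL)"
  have f': "Ev f' (pe (list_encode xs) y) (g (y # xs))" if "length xs = n" for xs y
  proof -
    have "Ev (ccons cR cL) (pe (list_encode xs) y) (list_encode (y # xs))"
      by (rule Ev_cons) (auto intro: Ev_L[of "pe (list_encode xs) y", simplified] Ev_R[of "pe (list_encode xs) y", simplified])
    moreover have "Ev cg (list_encode (y # xs)) (g (y # xs))" using cg that by (simp del: list_encode.simps)
    ultimately show ?thesis unfolding f'_def by (rule Ev_comp)
  qed
  show ?case
  proof (rule exI[of _ "cfind f'"], intro allI impI)
    fix xs :: "nat list" assume l: "length xs = n"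
    then obtain y0 where y0: "g (y0 # xs) = 0" using rf_mu.hyps(2) by blast
    let ?v = "LEAST y. g (y # xs) = 0"
    have v: "g (?v # xs) = 0" by (rule LeastI[of _ y0]) (rule y0)
    have "\<forall>y<?v. \<exists>w. w \<noteq> 0 \<and> Ev f' (pe (list_encode xs) y) w"
      using not_less_Least f'[OF l] by blast
    then show "Ev (cfind f') (list_encode xs) ?v"
      unfolding cfind_def using f'[OF l, of ?v] v by (auto intro: ev_find)
  qed
qed


definition tc :: "nat \<Rightarrow> nat" where "tc t = pfst t"
definition tn :: "nat \<Rightarrow> nat" where "tn t = pfst (psnd t)"
definition tv :: "nat \<Rightarrow> nat" where "tv t = psnd (psnd t)"
lemma t_simps[simp]: "tc (pe c (pe n v)) = c" "tn (pe c (pe n v)) = n" "tv (pe c (pe n v)) = v"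
  by (simp_all add: tc_def tn_def tv_def)
lemma t_split: "pe (tc t) (pe (tn t) (tv t)) = t" by (simp add: tc_def tn_def tv_def)

definition JustG :: "((nat \<Rightarrow> bool) \<Rightarrow> bool) \<Rightarrow> nat \<Rightarrow> bool" where
  "JustG M t \<longleftrightarrow>
    (if pfst (tc t) = 0 then tv t = 0 else
     if pfst (tc t) = 1 then tv t = Suc (tn t) else
     if pfst (tc t) = 2 then tv t = tn t - 1 else
     if pfst (tc t) = 3 then tv t = pfst (tn t) else
     if pfst (tc t) = 4 then tv t = psnd (tn t) else
     if pfst (tc t) = 5 then M (\<lambda>u. u = pe (pfst (psnd (tc t))) (pe (tn t) (pfst (tv t))))
        \<and> M (\<lambda>u. u = pe (psnd (psnd (tc t))) (pe (tn t) (psnd (tv t)))) else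
     if pfst (tc t) = 6 then M (\<lambda>u. tc u = psnd (psnd (tc t)) \<and> tn u = tn t \<and>
        M (\<lambda>w. w = pe (pfst (psnd (tc t))) (pe (tv u) (tv t)))) else
     if pfst (tc t) = 7 then
       (if psnd (tn t) = 0 then M (\<lambda>u. u = pe (pfst (psnd (tc t))) (pe (pfst (tn t)) (tv t)))
        else M (\<lambda>u. tc u = tc t \<and> tn u = pe (pfst (tn t)) (psnd (tn t) - 1) \<and>
        M (\<lambda>w. w = pe (psnd (psnd (tc t))) (pe (pe (pfst (tn t)) (pe (psnd (tn t) - 1) (tv u))) (tv t))))) else
     if pfst (tc t) = 8 then M (\<lambda>u. u = pe (psnd (tc t)) (pe (pe (tn t) (tv t)) 0)) \<and>
        (\<forall>y<tv t. M (\<lambda>u. tc u = psnd (tc t) \<and> tn u = pe (tn t) y \<and> tv u \<noteq> 0))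
     else False)"

definition Just :: "nat set \<Rightarrow> nat \<Rightarrow> bool" where
  "Just E t = JustG (\<lambda>P. \<exists>u\<in>E. P u) t"

lemma Just_mono: "Just E t \<Longrightarrow> E \<subseteq> F \<Longrightarrow> Just F t"
  unfolding Just_def JustG_def
  by (auto split: if_split_asm; meson subsetD)

definition Valid :: "nat list \<Rightarrow> bool" where
  "Valid xs \<longleftrightarrow> (\<forall>i<length xs. Just (set (take i xs)) (xs ! i))"

lemma Valid_Nil: "Valid []" by (simp add: Valid_def)

lemma Valid_app: "Valid xs \<Longrightarrow> Valid ys \<Longrightarrow> Valid (xs @ ys)"
  unfolding Valid_def
proof (intro allI impI)
  fix i assume A: "\<forall>i<length xs. Just (set (take i xs)) (xs ! i)" and B: "\<forall>i<length ys. Just (set (take i ys)) (ys ! i)"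
    and i: "i < length (xs @ ys)"
  show "Just (set (take i (xs @ ys))) ((xs @ ys) ! i)"
  proof (cases "i < length xs")
    case True
    then show ?thesis using A by (simp add: nth_append)
  next
    case False
    then have "Just (set (take (i - length xs) ys)) (ys ! (i - length xs))" using B i by simp
    then show ?thesis using False by (auto simp: nth_append elim!: Just_mono)
  qed
qed

lemma Valid_snoc: "Valid xs \<Longrightarrow> Just (set xs) t \<Longrightarrow> Valid (xs @ [t])"
  unfolding Valid_def by (auto simp: nth_append less_Suc_eq)

lemma Valid_sound: "Valid xs \<Longrightarrow> i < length xs \<Longrightarrow> Ev (tc (xs!i)) (tn (xs!i)) (tv (xs!i))"
proof (induction i rule: less_induct)
  case (less i)
  have IH: "\<forall>u\<in>set (take i xs). Ev (tc u) (tn u) (tv u)"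
  proof
    fix u assume "u \<in> set (take i xs)"
    then obtain j where "j < i" "u = xs ! j" using less.prems by (auto simp: in_set_conv_nth)
    then show "Ev (tc u) (tn u) (tv u)" using less by auto
  qed
  have J: "Just (set (take i xs)) (xs ! i)" using less.prems unfolding Valid_def by auto
  define t where "t = xs ! i"
  define E where "E = set (take i xs)"
  have IH': "\<And>u. u \<in> E \<Longrightarrow> Ev (tc u) (tn u) (tv u)" using IH E_def by auto
  have J': "JustG (\<lambda>P. \<exists>u\<in>E. P u) t" using J unfolding Just_def E_def t_def .
  obtain k p where kp: "tc t = pe k p" by (metis pe_split)
  have Ev_of: "\<And>c n v. pe c (pe n v) \<in> E \<Longrightarrow> Ev c n v" using IH' by fastforce
  have J'': "JustG (\<lambda>P. \<exists>u\<in>E. P u) t" by (rule J')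
  note J3 = J''[unfolded JustG_def kp pfst_pe psnd_pe]
  consider "k = 0" | "k = 1" | "k = 2" | "k = 3" | "k = 4" | "k = 5" | "k = 6" | "k = 7" | "k = 8" | "k > 8" by linarith
  then have "Ev (pe k p) (tn t) (tv t)"
  proof cases
    assume "k = 0" then show ?thesis using J3 ev_zero[of p "tn t"] by simp
  next
    assume "k = 1" then show ?thesis using J3 ev_succ[of p "tn t"] by simp
  next
    assume "k = 2" then show ?thesis using J3 ev_pred[of p "tn t"] by simp
  next
    assume "k = 3" then show ?thesis using J3 ev_fst[of p "tn t"] by simp
  next
    assume "k = 4" then show ?thesis using J3 ev_snd[of p "tn t"] by simp
  next
    assume k: "k = 5"
    then have "\<exists>u\<in>E. u = pe (pfst p) (pe (tn t) (pfst (tv t)))"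
      "\<exists>u\<in>E. u = pe (psnd p) (pe (tn t) (psnd (tv t)))" using J3 by simp_all
    then have "Ev (pfst p) (tn t) (pfst (tv t))" "Ev (psnd p) (tn t) (psnd (tv t))"
      using Ev_of by auto
    from ev_pair[OF this] k show ?thesis by simp
  next
    assume k: "k = 6"
    then have "\<exists>u\<in>E. tc u = psnd p \<and> tn u = tn t \<and>
        (\<exists>w\<in>E. w = pe (pfst p) (pe (tv u) (tv t)))" using J3 by simp
    then obtain u where u: "u \<in> E" "tc u = psnd p" "tn u = tn t"
       "pe (pfst p) (pe (tv u) (tv t)) \<in> E" by auto
    from IH'[OF u(1)] u(2,3) have "Ev (psnd p) (tn t) (tv u)" by simp
    from ev_comp[OF this Ev_of[OF u(4)]] k show ?thesis by simp
  next
    assume k: "k = 7"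
    show ?thesis
    proof (cases "psnd (tn t) = 0")
      case True
      then have "\<exists>u\<in>E. u = pe (pfst p) (pe (pfst (tn t)) (tv t))" using J3 k by simp
      then have "Ev (pfst p) (pfst (tn t)) (tv t)" using Ev_of by auto
      from ev_prec0[OF this, of "psnd p"] True have "Ev (pe 7 p) (pe (pfst (tn t)) (psnd (tn t))) (tv t)" by simp
      then show ?thesis using k by simp
    next
      case False
      then have "\<exists>u\<in>E. tc u = pe k p \<and> tn u = pe (pfst (tn t)) (psnd (tn t) - 1) \<and>
        (\<exists>w\<in>E. w = pe (psnd p) (pe (pe (pfst (tn t)) (pe (psnd (tn t) - 1) (tv u))) (tv t)))"
        using J3 k kp by simp
      then obtain u where u: "u \<in> E" "tc u = pe k p" "tn u = pe (pfst (tn t)) (psnd (tn t) - 1)"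
        "pe (psnd p) (pe (pe (pfst (tn t)) (pe (psnd (tn t) - 1) (tv u))) (tv t)) \<in> E" by auto
      from IH'[OF u(1)] u(2,3) k have "Ev (pe 7 (pe (pfst p) (psnd p))) (pe (pfst (tn t)) (psnd (tn t) - 1)) (tv u)" by simp
      from ev_precS[OF this Ev_of[OF u(4)]] have "Ev (pe 7 (pe (pfst p) (psnd p))) (pe (pfst (tn t)) (Suc (psnd (tn t) - 1))) (tv t)" .
      then show ?thesis using k False by simp
    qed
  next
    assume k: "k = 8"
    then have a2: "\<exists>u\<in>E. u = pe p (pe (pe (tn t) (tv t)) 0)"
      and a3: "\<forall>y<tv t. \<exists>u\<in>E. tc u = p \<and> tn u = pe (tn t) y \<and> tv u \<noteq> 0" using J3 by simp_all
    have "Ev p (pe (tn t) (tv t)) 0" using a2 Ev_of by auto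
    moreover have "\<forall>y<tv t. \<exists>w. w \<noteq> 0 \<and> Ev p (pe (tn t) y) w"
    proof (intro allI impI)
      fix y assume "y < tv t"
      with a3 obtain u where "u \<in> E" "tc u = p" "tn u = pe (tn t) y" "tv u \<noteq> 0" by blast
      with IH' show "\<exists>w. w \<noteq> 0 \<and> Ev p (pe (tn t) y) w" by force
    qed
    ultimately have "Ev (pe 8 p) (tn t) (tv t)" by (rule ev_find)
    with k show ?thesis by simp
  next
    assume "k > 8" then show ?thesis using J3 by simp
  qed
  then have "Ev (tc t) (tn t) (tv t)" using kp by simp
  then show ?case unfolding t_def .
qed

lemma Valid_sound_mem: "Valid xs \<Longrightarrow> pe c (pe n v) \<in> set xs \<Longrightarrow> Ev c n v"
proof -
  assume "Valid xs" "pe c (pe n v) \<in> set xs"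
  then obtain i where "i < length xs" "xs ! i = pe c (pe n v)" by (auto simp: in_set_conv_nth)
  with Valid_sound[OF \<open>Valid xs\<close> this(1)] show ?thesis by simp
qed

lemma Valid_many: "(\<forall>y<(v::nat). \<exists>xs. Valid xs \<and> T y \<in> set xs) \<Longrightarrow> \<exists>xs. Valid xs \<and> (\<forall>y<v. T y \<in> set xs)"
proof (induction v)
  case 0 then show ?case using Valid_Nil by auto
next
  case (Suc v)
  then obtain xs where xs: "Valid xs" "\<forall>y<v. T y \<in> set xs" by auto
  from Suc.prems obtain ys where ys: "Valid ys" "T v \<in> set ys" by auto
  show ?case using Valid_app[OF xs(1) ys(1)] xs ys by (auto intro!: exI[of _ "xs @ ys"] simp: less_Suc_eq)
qed

lemma snoc_mem: "Valid L \<Longrightarrow> Just (set L) t \<Longrightarrow> \<exists>xs. Valid xs \<and> t \<in> set xs"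
  by (metis Valid_snoc in_set_conv_decomp)

lemma Valid_complete: "Ev c n v \<Longrightarrow> \<exists>xs. Valid xs \<and> pe c (pe n v) \<in> set xs"
proof (induction rule: Ev.induct)
  case (ev_zero p n)
  show ?case by (rule snoc_mem[OF Valid_Nil]) (simp add: Just_def JustG_def)
next
  case (ev_succ p n)
  show ?case by (rule snoc_mem[OF Valid_Nil]) (simp add: Just_def JustG_def)
next
  case (ev_pred p n)
  show ?case by (rule snoc_mem[OF Valid_Nil]) (simp add: Just_def JustG_def)
next
  case (ev_fst p n)
  show ?case by (rule snoc_mem[OF Valid_Nil]) (simp add: Just_def JustG_def)
next
  case (ev_snd p n)
  show ?case by (rule snoc_mem[OF Valid_Nil]) (simp add: Just_def JustG_def)
next
  case (ev_pair f n a g b)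
  from ev_pair.IH obtain xs ys where V1: "Valid xs" "pe f (pe n a) \<in> set xs" and V2: "Valid ys" "pe g (pe n b) \<in> set ys" by blast
  then show ?case
    by (intro snoc_mem[OF Valid_app[OF V1(1) V2(1)]]) (auto simp: Just_def JustG_def)
next
  case (ev_comp g n a f b)
  from ev_comp.IH obtain xs ys where V1: "Valid xs" "pe g (pe n a) \<in> set xs" and V2: "Valid ys" "pe f (pe a b) \<in> set ys" by blast
  then show ?case
    by (intro snoc_mem[OF Valid_app[OF V1(1) V2(1)]]) (auto simp: Just_def JustG_def intro!: bexI[of _ "pe g (pe n a)"])
next
  case (ev_prec0 f a v g)
  from ev_prec0.IH obtain xs where "Valid xs" "pe f (pe a v) \<in> set xs" by blast
  then show ?case
    by (intro snoc_mem) (auto simp: Just_def JustG_def)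
next
  case (ev_precS f g a k r v)
  from ev_precS.IH obtain xs ys where V1: "Valid xs" "pe (pe 7 (pe f g)) (pe (pe a k) r) \<in> set xs" and V2: "Valid ys" "pe g (pe (pe a (pe k r)) v) \<in> set ys" by blast
  then show ?case
    by (intro snoc_mem[OF Valid_app[OF V1(1) V2(1)]]) (auto simp: Just_def JustG_def intro!: bexI[of _ "pe (pe 7 (pe f g)) (pe (pe a k) r)"])
next
  case (ev_find f n v)
  from ev_find.IH(1) obtain xs where xs: "Valid xs" "pe f (pe (pe n v) 0) \<in> set xs" by blast
  from ev_find.IH(2) have "\<forall>y<v. \<exists>w. w \<noteq> 0 \<and> (\<exists>xs. Valid xs \<and> pe f (pe (pe n y) w) \<in> set xs)" by blast
  then obtain W where W: "\<forall>y<v. W y \<noteq> 0 \<and> (\<exists>xs. Valid xs \<and> pe f (pe (pe n y) (W y)) \<in> set xs)" by metis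
  then obtain ys where ys: "Valid ys" "\<forall>y<v. pe f (pe (pe n y) (W y)) \<in> set ys"
    using Valid_many[of v "\<lambda>y. pe f (pe (pe n y) (W y))"] by auto
  have "Just (set (xs @ ys)) (pe (pe 8 f) (pe n v))"
    unfolding Just_def JustG_def
  proof (simp, intro conjI allI impI)
    show "pe f (pe (pe n v) 0) \<in> set xs \<or> pe f (pe (pe n v) 0) \<in> set ys" using xs by simp
  next
    fix y assume "y < v"
    then show "\<exists>u\<in>set xs \<union> set ys. tc u = f \<and> tn u = pe n y \<and> 0 < tv u"
      using ys W by (intro bexI[of _ "pe f (pe (pe n y) (W y))"]) auto
  qed
  then show ?case by (rule snoc_mem[OF Valid_app[OF xs(1) ys(1)]])
qed


definition tlc :: "nat \<Rightarrow> nat" where "tlc x = psnd (x - 1)"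
definition nthc :: "nat \<Rightarrow> nat \<Rightarrow> nat" where "nthc L j = pfst ((tlc ^^ j) L - 1)"

lemma tlc_le: "tlc (list_encode ys) = list_encode (tl ys)"
proof (cases ys)
  case Nil
  have "psnd 0 = 0" by (metis pe_ge2 le_zero_eq pe_split)
  then show ?thesis using Nil by (simp add: tlc_def)
next
  case (Cons a l) then show ?thesis by (simp add: tlc_def le_cons del: list_encode.simps)
qed

lemma tlc_pow: "(tlc ^^ j) (list_encode xs) = list_encode (drop j xs)"
  by (induction j) (auto simp: tlc_le drop_Suc tl_drop)

lemma le_zero_iff: "list_encode ys = 0 \<longleftrightarrow> ys = []"
  by (cases ys) auto

lemma nthc_le: "j < length xs \<Longrightarrow> nthc (list_encode xs) j = xs ! j"
  unfolding nthc_def tlc_pow by (metis Cons_nth_drop_Suc le_cons diff_Suc_1 pfst_pe)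

lemma length_le_code: "length xs \<le> list_encode xs"
proof (induction xs)
  case (Cons a xs)
  have "list_encode xs \<le> pe a (list_encode xs)" by (rule pe_ge2)
  with Cons show ?case by (simp add: le_cons del: list_encode.simps)
qed simp

definition JustN :: "nat \<Rightarrow> nat \<Rightarrow> bool" where
  "JustN L i = JustG (\<lambda>P. \<exists>j<i. P (nthc L j)) (nthc L i)"
definition Vn :: "nat \<Rightarrow> bool" where
  "Vn L \<longleftrightarrow> (\<forall>i<L. (tlc ^^ i) L \<noteq> 0 \<longrightarrow> JustN L i)"
definition memn :: "nat \<Rightarrow> nat \<Rightarrow> bool" where
  "memn L t \<longleftrightarrow> (\<exists>j<L. (tlc ^^ j) L \<noteq> 0 \<and> nthc L j = t)"

lemma pow_ne0: "(tlc ^^ j) (list_encode xs) \<noteq> 0 \<longleftrightarrow> j < length xs"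
  by (simp add: tlc_pow le_zero_iff not_le)

lemma ex_take: "i \<le> length xs \<Longrightarrow> (\<exists>u\<in>set (take i xs). P u) \<longleftrightarrow> (\<exists>j<i. P (xs!j))"
proof
  assume "i \<le> length xs" "\<exists>u\<in>set (take i xs). P u"
  then obtain j where "j < length (take i xs)" "P (take i xs ! j)" by (auto simp: in_set_conv_nth)
  then show "\<exists>j<i. P (xs!j)" by auto
next
  assume "i \<le> length xs" "\<exists>j<i. P (xs!j)"
  then obtain j where j: "j < i" "P (xs!j)" by blast
  then have "take i xs ! j \<in> set (take i xs)" using \<open>i \<le> length xs\<close> by (intro nth_mem) simp
  with j show "\<exists>u\<in>set (take i xs). P u" by auto
qed

lemma JustN_le: "i < length xs \<Longrightarrow> JustN (list_encode xs) i = Just (set (take i xs)) (xs ! i)"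
proof -
  assume i: "i < length xs"
  have M: "(\<lambda>P. \<exists>j<i. P (nthc (list_encode xs) j)) = (\<lambda>P. \<exists>u\<in>set (take i xs). P u)"
  proof (rule ext)
    fix P
    have "(\<exists>j<i. P (nthc (list_encode xs) j)) \<longleftrightarrow> (\<exists>j<i. P (xs!j))"
      using i nthc_le by (metis order.strict_trans)
    also have "\<dots> \<longleftrightarrow> (\<exists>u\<in>set (take i xs). P u)" using i by (simp add: ex_take)
    finally show "(\<exists>j<i. P (nthc (list_encode xs) j)) = (\<exists>u\<in>set (take i xs). P u)" .
  qed
  show ?thesis unfolding JustN_def Just_def M nthc_le[OF i] ..
qed

lemma Vn_le: "Vn (list_encode xs) \<longleftrightarrow> Valid xs"
proof -
  have "Vn (list_encode xs) \<longleftrightarrow> (\<forall>i<list_encode xs. i < length xs \<longrightarrow> JustN (list_encode xs) i)"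
    unfolding Vn_def pow_ne0 ..
  also have "\<dots> \<longleftrightarrow> (\<forall>i<length xs. JustN (list_encode xs) i)"
    using length_le_code[of xs] by (meson order.strict_trans2)
  also have "\<dots> \<longleftrightarrow> Valid xs" unfolding Valid_def using JustN_le by blast
  finally show ?thesis .
qed

lemma memn_le: "memn (list_encode xs) t \<longleftrightarrow> t \<in> set xs"
proof -
  have "memn (list_encode xs) t \<longleftrightarrow> (\<exists>j<list_encode xs. j < length xs \<and> nthc (list_encode xs) j = t)"
    unfolding memn_def pow_ne0 ..
  also have "\<dots> \<longleftrightarrow> (\<exists>j<length xs. xs ! j = t)"
    using length_le_code[of xs] by (force simp: nthc_le)
  also have "\<dots> \<longleftrightarrow> t \<in> set xs" by (auto simp: in_set_conv_nth)
  finally show ?thesis .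
qed

lemma cert_iff: "Ev c n v \<longleftrightarrow> (\<exists>L. Vn L \<and> memn L (pe c (pe n v)))"
proof
  assume "Ev c n v"
  then obtain xs where "Valid xs" "pe c (pe n v) \<in> set xs" using Valid_complete by blast
  then show "\<exists>L. Vn L \<and> memn L (pe c (pe n v))" by (auto simp: Vn_le memn_le intro!: exI[of _ "list_encode xs"])
next
  assume "\<exists>L. Vn L \<and> memn L (pe c (pe n v))"
  then obtain L where "Vn L" "memn L (pe c (pe n v))" by blast
  then have "Vn (list_encode (list_decode L))" "memn (list_encode (list_decode L)) (pe c (pe n v))" by simp_all
  then have "Valid (list_decode L)" "pe c (pe n v) \<in> set (list_decode L)"
    unfolding Vn_le memn_le .
  then show "Ev c n v" by (rule Valid_sound_mem)
qed

definition check :: "nat \<Rightarrow> nat \<Rightarrow> nat \<Rightarrow> bool" where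
  "check e x p \<longleftrightarrow> Vn (psnd p) \<and> memn (psnd p) (pe e (pe (Suc (pe x (Suc (pe (pfst p) 0)))) 0))"

lemma ce_check: "ce S \<Longrightarrow> \<exists>e. S = {x. \<exists>p. check e x p}"
proof -
  assume "ce S"
  then obtain g where g: "recfn 2 g" "S = {x. \<exists>y. g [x, y] = 0}" unfolding ce_def by blast
  from compile[OF g(1)] obtain c where c: "\<forall>xs. length xs = 2 \<longrightarrow> Ev c (list_encode xs) (g xs)" by blast
  have "(\<exists>y. g [x, y] = 0) \<longleftrightarrow> (\<exists>p. check c x p)" for x
  proof -
    have "g [x, y] = 0 \<longleftrightarrow> Ev c (list_encode [x, y]) 0" for y
      using c[rule_format, of "[x,y]"] Ev_det by auto
    also have "\<dots>y \<longleftrightarrow> (\<exists>L. Vn L \<and> memn L (pe c (pe (Suc (pe x (Suc (pe y 0)))) 0)))" for y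
      by (simp add: cert_iff le_cons del: list_encode.simps(2))
    finally have "(\<exists>y. g [x, y] = 0) \<longleftrightarrow> (\<exists>y L. Vn L \<and> memn L (pe c (pe (Suc (pe x (Suc (pe y 0)))) 0)))" by blast
    also have "\<dots> \<longleftrightarrow> (\<exists>p. check c x p)"
      unfolding check_def
    proof
      assume "\<exists>y L. Vn L \<and> memn L (pe c (pe (Suc (pe x (Suc (pe y 0)))) 0))"
      then obtain y L where "Vn L" "memn L (pe c (pe (Suc (pe x (Suc (pe y 0)))) 0))" by blast
      then show "\<exists>p. Vn (psnd p) \<and> memn (psnd p) (pe c (pe (Suc (pe x (Suc (pe (pfst p) 0)))) 0))"
        by (intro exI[of _ "pe y L"]) simp
    next
      assume "\<exists>p. Vn (psnd p) \<and> memn (psnd p) (pe c (pe (Suc (pe x (Suc (pe (pfst p) 0)))) 0))"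
      then show "\<exists>y L. Vn L \<and> memn L (pe c (pe (Suc (pe x (Suc (pe y 0)))) 0))" by blast
    qed
    finally show ?thesis .
  qed
  with g(2) show ?thesis by blast
qed


lemma cp_if[intro]: "cp P \<Longrightarrow> cp Q \<Longrightarrow> cp R \<Longrightarrow> cp (\<lambda>x. if P x then Q x else R x)"
proof -
  assume "cp P" "cp Q" "cp R"
  then have "cp (\<lambda>x. (P x \<and> Q x) \<or> (\<not> P x \<and> R x))" by (intro cp_or cp_and cp_not)
  then show ?thesis unfolding cp_def by (rule cf_eqI) auto
qed

lemma cf_tlc0: "cf tlc"
proof -
  have "cf (\<lambda>x. psnd (x - 1))" by (intro cf_psnd cf_sub cf_id cf_const)
  then show ?thesis unfolding tlc_def[abs_def] .
qed

lemma cf_tlcpow: "cf f \<Longrightarrow> cf g \<Longrightarrow> cf (\<lambda>x. (tlc ^^ g x) (f x))"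
  by (rule cf_funpow[OF cf_tlc0])

lemma cf_nthc: "cf f \<Longrightarrow> cf g \<Longrightarrow> cf (\<lambda>x. nthc (f x) (g x))"
  unfolding nthc_def by (intro cf_pfst cf_sub cf_tlcpow cf_const)

lemma cf_tc: "cf f \<Longrightarrow> cf (\<lambda>x. tc (f x))" unfolding tc_def by (rule cf_pfst)
lemma cf_tn: "cf f \<Longrightarrow> cf (\<lambda>x. tn (f x))" unfolding tn_def by (intro cf_pfst cf_psnd)
lemma cf_tv: "cf f \<Longrightarrow> cf (\<lambda>x. tv (f x))" unfolding tv_def by (intro cf_pfst cf_psnd)

lemmas cf_rules = cf_id cf_const cf_add cf_sub cf_mult cf_Suc cf_pe cf_pfst cf_psnd cf_if
  cf_least cf_tlcpow cf_nthc cf_tc cf_tn cf_tv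
lemmas cp_rules = cp_if cp_eq cp_less cp_le cp_neq cp_not cp_and cp_or cp_imp cp_True cp_False cp_ex cp_all

lemma cp_JustN: assumes L: "cf L" and I: "cf I" shows "cp (\<lambda>x. JustN (L x) (I x))"
  unfolding JustN_def JustG_def
  by (intro cp_rules cf_rules cf_compose[OF L] cf_compose[OF I])

lemma cp_check: assumes e: "cf e" and x: "cf x" and p: "cf p"
  shows "cp (\<lambda>z. check (e z) (x z) (p z))"
  unfolding check_def Vn_def memn_def
  by (intro cp_rules cf_rules cp_JustN cf_compose[OF e] cf_compose[OF x] cf_compose[OF p])


lemma div2_least: "(LEAST q. Suc x - 2 * Suc q = 0) = x div 2"
  by (rule Least_equality) auto

lemma cf_div2: "cf (\<lambda>x. x div 2)"
proof -
  have "cf (\<lambda>x. LEAST q. Suc x - 2 * Suc q = 0)"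
    apply (rule cf_mu'[where g="\<lambda>q x. Suc x - 2 * Suc q"])
     apply (intro cf_rules)
    apply simp apply presburger
    done
  then show ?thesis by (simp only: div2_least)
qed

lemma rec_par: "rec_nat 0 (\<lambda>k r. 1 - r) (x::nat) = (if odd x then 1 else (0::nat))"
  by (induction x) auto

lemma cp_odd: "cf f \<Longrightarrow> cp (\<lambda>x. odd (f x))"
proof -
  assume f: "cf f"
  have "cf (\<lambda>x. rec_nat 0 (\<lambda>k r. 1 - r) (f x))" by (intro cf_rec cf_rules f)
  then show ?thesis unfolding cp_def rec_par .
qed

lemma div_pow2_iter: "(n::nat) div 2 ^ i = ((\<lambda>m. m div 2) ^^ i) n"
  by (induction i) (auto simp: div_mult2_eq power_Suc2 simp del: power_Suc)

lemma cp_mem: "cf f \<Longrightarrow> cf g \<Longrightarrow> cp (\<lambda>x. f x \<in> set_decode (g x))"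
proof -
  assume f: "cf f" and g: "cf g"
  have "cp (\<lambda>x. odd (((\<lambda>m. m div 2) ^^ f x) (g x)))"
    by (intro cp_odd cf_funpow[OF cf_div2] f g)
  then show ?thesis unfolding set_decode_def by (simp add: div_pow2_iter)
qed

lemma mem_less: "i \<in> set_decode n \<Longrightarrow> i < n"
proof -
  assume "i \<in> set_decode n"
  then have "odd (n div 2 ^ i)" by (simp add: set_decode_def)
  then have "n div 2 ^ i \<noteq> 0" by (metis even_zero)
  then have "2 ^ i \<le> n" by (metis div_greater_zero_iff neq0_conv)
  then show ?thesis using less_exp[of i] by linarith
qed

definition disj :: "nat \<Rightarrow> nat \<Rightarrow> bool" where
  "disj a b \<longleftrightarrow> (\<forall>i<a. \<not> (i \<in> set_decode a \<and> i \<in> set_decode b))"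
definition sub :: "nat \<Rightarrow> nat \<Rightarrow> bool" where
  "sub a b \<longleftrightarrow> (\<forall>i<a. i \<in> set_decode a \<longrightarrow> i \<in> set_decode b)"

lemma disj_iff: "disj a b \<longleftrightarrow> set_decode a \<inter> set_decode b = {}"
  unfolding disj_def using mem_less by blast
lemma sub_iff: "sub a b \<longleftrightarrow> set_decode a \<subseteq> set_decode b"
  unfolding sub_def using mem_less by blast

lemma cp_disj: "cf f \<Longrightarrow> cf g \<Longrightarrow> cp (\<lambda>x. disj (f x) (g x))"
proof -
  assume f: "cf f" and g: "cf g"
  show ?thesis unfolding disj_def
    by (intro cp_rules cf_rules cp_mem cf_compose[OF f] cf_compose[OF g])
qed

lemma cp_sub: "cf f \<Longrightarrow> cf g \<Longrightarrow> cp (\<lambda>x. sub (f x) (g x))"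
proof -
  assume f: "cf f" and g: "cf g"
  show ?thesis unfolding sub_def
    by (intro cp_rules cf_rules cp_mem cf_compose[OF f] cf_compose[OF g])
qed

definition W :: "nat \<Rightarrow> nat \<Rightarrow> nat \<Rightarrow> bool" where
  "W s e x \<longleftrightarrow> (\<exists>p<s. check e x p)"

definition mfd :: "nat \<Rightarrow> nat \<Rightarrow> nat \<Rightarrow> nat" where
  "mfd s e h = (LEAST x. x = s \<or> (x \<noteq> 0 \<and> disj x h \<and> W s e x))"

definition fd :: "nat \<Rightarrow> nat \<Rightarrow> nat \<Rightarrow> nat" where
  "fd s e h = (if mfd s e h < s then mfd s e h else 0)"

definition Hh :: "nat \<Rightarrow> nat \<Rightarrow> nat" where
  "Hh s e = rec_nat 0 (\<lambda>i r. r + fd s i r) e"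

definition found :: "nat \<Rightarrow> nat \<Rightarrow> nat" where
  "found s e = fd s e (Hh s e)"

definition ok :: "nat \<Rightarrow> nat \<Rightarrow> bool" where
  "ok z e \<longleftrightarrow> found z e \<noteq> 0 \<and> sub (found z e) z \<and> found z e \<noteq> z"

definition stepc :: "nat \<Rightarrow> nat \<Rightarrow> nat" where
  "stepc z C = (if \<exists>e<z. ok z e then (if z - found z (LEAST e. e = z \<or> ok z e) \<in> set_decode C then 0 else 1) else 0)"

definition Hist :: "nat \<Rightarrow> nat" where
  "Hist z = rec_nat 0 (\<lambda>i C. C + stepc i C * 2 ^ i) z"

definition col :: "nat \<Rightarrow> nat" where
  "col z = stepc z (Hist z)"

lemma cf_W: "cf a \<Longrightarrow> cf b \<Longrightarrow> cf c \<Longrightarrow> cp (\<lambda>x. W (a x) (b x) (c x))"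
proof -
  assume a: "cf a" and b: "cf b" and c: "cf c"
  show ?thesis unfolding W_def
    by (intro cp_rules cf_rules cp_check cf_compose[OF a] cf_compose[OF b] cf_compose[OF c])
qed

lemma cf_fd: "cf a \<Longrightarrow> cf b \<Longrightarrow> cf c \<Longrightarrow> cf (\<lambda>x. fd (a x) (b x) (c x))"
proof -
  assume a: "cf a" and b: "cf b" and c: "cf c"
  show ?thesis unfolding fd_def mfd_def
    by (intro cp_rules cf_rules cf_W cp_disj cf_compose[OF a] cf_compose[OF b] cf_compose[OF c])
qed

lemma cf_Hh: "cf a \<Longrightarrow> cf b \<Longrightarrow> cf (\<lambda>x. Hh (a x) (b x))"
proof -
  assume a: "cf a" and b: "cf b"
  show ?thesis unfolding Hh_def
    by (intro cf_rec cf_rules cf_fd cf_compose[OF a] cf_compose[OF b])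
qed

lemma cf_found: "cf a \<Longrightarrow> cf b \<Longrightarrow> cf (\<lambda>x. found (a x) (b x))"
  unfolding found_def by (intro cf_fd cf_Hh)

lemma cp_ok: "cf a \<Longrightarrow> cf b \<Longrightarrow> cp (\<lambda>x. ok (a x) (b x))"
proof -
  assume a: "cf a" and b: "cf b"
  show ?thesis unfolding ok_def
    by (intro cp_rules cf_rules cp_sub cf_found cf_compose[OF a] cf_compose[OF b])
qed

lemma cf_stepc: "cf a \<Longrightarrow> cf b \<Longrightarrow> cf (\<lambda>x. stepc (a x) (b x))"
proof -
  assume a: "cf a" and b: "cf b"
  show ?thesis unfolding stepc_def
    by (intro cp_rules cf_rules cp_ok cp_mem cf_found cf_compose[OF a] cf_compose[OF b])
qed

lemma rec_pow2: "rec_nat 1 (\<lambda>k r. r + r) n = (2::nat) ^ n" by (induction n) auto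

lemma cf_pow2: "cf f \<Longrightarrow> cf (\<lambda>x. 2 ^ f x)"
proof -
  assume f: "cf f"
  have "cf (\<lambda>x. rec_nat 1 (\<lambda>k r. r + r) (f x))" by (intro cf_rec cf_rules f)
  then show ?thesis unfolding rec_pow2 .
qed

lemma cf_col: "cf col"
  unfolding col_def Hist_def
  by (intro cf_stepc cf_rec cf_rules cf_pow2)


lemma enc_union: "finite A \<Longrightarrow> finite B \<Longrightarrow> A \<inter> B = {} \<Longrightarrow> set_encode (A \<union> B) = set_encode A + set_encode B"
  unfolding set_encode_def by (rule sum.union_disjoint)

lemma sd_add: "set_decode a \<inter> set_decode b = {} \<Longrightarrow> set_decode (a + b) = set_decode a \<union> set_decode b"
proof -
  assume d: "set_decode a \<inter> set_decode b = {}"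
  have "set_encode (set_decode a \<union> set_decode b) = a + b"
    using enc_union[OF finite_set_decode finite_set_decode d] by simp
  then have "set_decode (a + b) = set_decode (set_encode (set_decode a \<union> set_decode b))" by simp
  then show ?thesis by simp
qed

lemma sd_zero_iff: "set_decode a = {} \<longleftrightarrow> a = 0"
  by (metis set_decode_inverse set_decode_zero set_encode_empty)

subsection \<open>History of colours\<close>

lemma stepc_01: "stepc z C = 0 \<or> stepc z C = 1"
  unfolding stepc_def by auto

lemma col_01: "col z = 0 \<or> col z = 1"
  unfolding col_def by (rule stepc_01)

lemma Hist_eq: "Hist z = set_encode {w. w < z \<and> col w = 1}"
proof (induction z)
  case 0 show ?case by (simp add: Hist_def)
next
  case (Suc z)
  have H: "Hist (Suc z) = Hist z + col z * 2 ^ z" by (simp add: Hist_def col_def)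
  show ?case
  proof (cases "col z = 1")
    case True
    then have "{w. w < Suc z \<and> col w = 1} = insert z {w. w < z \<and> col w = 1}" by (auto simp: less_Suc_eq)
    then show ?thesis using H Suc True by simp
  next
    case False
    then have "col z = 0" using col_01 by metis
    moreover have "{w. w < Suc z \<and> col w = 1} = {w. w < z \<and> col w = 1}" using False by (auto simp: less_Suc_eq)
    ultimately show ?thesis using H Suc by simp
  qed
qed

lemma col_mem: "w < z \<Longrightarrow> w \<in> set_decode (Hist z) \<longleftrightarrow> col w = 1"
  unfolding Hist_eq by simp

lemma col_rule:
  assumes e: "e < z" "ok z e"
  shows "col z \<noteq> col (z - found z (LEAST e. e = z \<or> ok z e))"
    and "z - found z (LEAST e. e = z \<or> ok z e) < z"
proof -
  let ?e = "LEAST e. e = z \<or> ok z e"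
  have "?e \<le> e" using e by (intro Least_le) simp
  moreover have "?e = z \<or> ok z ?e" by (rule LeastI[of _ z]) simp
  ultimately have ok: "ok z ?e" using e by auto
  then have "found z ?e \<noteq> 0" by (simp add: ok_def)
  moreover have "found z ?e \<le> z" using ok unfolding ok_def sub_iff by (intro subset_decode_imp_le) simp
  ultimately show lt: "z - found z ?e < z" by simp
  have "col z = (if z - found z ?e \<in> set_decode (Hist z) then 0 else 1)"
    unfolding col_def stepc_def using e by auto
  then show "col z \<noteq> col (z - found z ?e)"
    using col_mem[OF lt] col_01[of "z - found z ?e"] by auto
qed

subsection \<open>Stabilisation\<close>

definition Q :: "nat \<Rightarrow> nat \<Rightarrow> nat \<Rightarrow> bool" where
  "Q e h x \<longleftrightarrow> x \<noteq> 0 \<and> disj x h \<and> (\<exists>p. check e x p)"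

definition Fl :: "nat \<Rightarrow> nat \<Rightarrow> nat" where
  "Fl e h = (if \<exists>x. Q e h x then LEAST x. Q e h x else 0)"

definition HF :: "nat \<Rightarrow> nat" where
  "HF e = rec_nat 0 (\<lambda>i r. r + Fl i r) e"

lemma HF_0[simp]: "HF 0 = 0" by (simp add: HF_def)
lemma HF_Suc: "HF (Suc e) = HF e + Fl e (HF e)" by (simp add: HF_def)
lemma Hh_0[simp]: "Hh s 0 = 0" by (simp add: Hh_def)
lemma Hh_Suc: "Hh s (Suc e) = Hh s e + fd s e (Hh s e)" by (simp add: Hh_def)

lemma Fl_Q: "Fl e h \<noteq> 0 \<Longrightarrow> Q e h (Fl e h)"
  unfolding Fl_def by (metis (mono_tags, lifting) LeastI)

lemma Fl_ne0: "Q e h x \<Longrightarrow> Fl e h \<noteq> 0"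
  unfolding Fl_def by (metis (mono_tags, lifting) LeastI Q_def)

lemma fd_stab: "\<exists>s1. \<forall>s\<ge>s1. fd s e h = Fl e h"
proof (cases "\<exists>x. Q e h x")
  case True
  let ?x = "LEAST x. Q e h x"
  have Qx: "Q e h ?x" using True by (metis LeastI)
  then obtain p where p: "check e ?x p" by (auto simp: Q_def)
  have "fd s e h = ?x" if s: "s \<ge> max (Suc ?x) (Suc p)" for s
  proof -
    have "p < s" using s by simp
    then have Wx: "W s e ?x" using p unfolding W_def by blast
    have "mfd s e h = ?x" unfolding mfd_def
    proof (rule Least_equality)
      show "?x = s \<or> ?x \<noteq> 0 \<and> disj ?x h \<and> W s e ?x" using Qx Wx by (simp add: Q_def)
    next
      fix y assume y: "y = s \<or> y \<noteq> 0 \<and> disj y h \<and> W s e y"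
      show "?x \<le> y"
      proof (rule ccontr)
        assume "\<not> ?x \<le> y"
        then have "y < ?x" by simp
        then have "y \<noteq> s" using s by simp
        with y have "Q e h y" by (auto simp: Q_def W_def)
        then have "?x \<le> y" by (rule Least_le)
        with \<open>y < ?x\<close> show False by simp
      qed
    qed
    then show ?thesis using s by (simp add: fd_def)
  qed
  moreover have "Fl e h = ?x" using True by (simp add: Fl_def)
  ultimately show ?thesis by metis
next
  case False
  have "fd s e h = 0" for s
  proof (cases "mfd s e h < s")
    case True
    have "mfd s e h = s \<or> (mfd s e h \<noteq> 0 \<and> disj (mfd s e h) h \<and> W s e (mfd s e h))"
      unfolding mfd_def by (rule LeastI[of _ s]) simp
    with True have "Q e h (mfd s e h)" by (auto simp: Q_def W_def)
    with False show ?thesis by blast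
  qed (simp add: fd_def)
  moreover have "Fl e h = 0" using False by (simp add: Fl_def)
  ultimately show ?thesis by simp
qed

lemma H_stab: "\<exists>s0. \<forall>s\<ge>s0. \<forall>e\<le>E. Hh s e = HF e"
proof (induction E)
  case 0 show ?case by simp
next
  case (Suc E)
  then obtain s0 where s0: "\<forall>s\<ge>s0. \<forall>e\<le>E. Hh s e = HF e" by blast
  obtain s1 where s1: "\<forall>s\<ge>s1. fd s E (HF E) = Fl E (HF E)" using fd_stab by blast
  have "\<forall>s\<ge>max s0 s1. \<forall>e\<le>Suc E. Hh s e = HF e"
  proof (intro allI impI)
    fix s e assume s: "max s0 s1 \<le> s" and e: "e \<le> Suc E"
    show "Hh s e = HF e"
    proof (cases "e \<le> E")
      case True then show ?thesis using s0 s by simp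
    next
      case False
      then have "e = Suc E" using e by simp
      then show ?thesis using s0 s1 s by (simp add: Hh_Suc HF_Suc)
    qed
  qed
  then show ?case by blast
qed

lemma found_stab: "\<exists>s0. \<forall>s\<ge>s0. \<forall>e'\<le>e. found s e' = Fl e' (HF e')"
proof -
  obtain s0 where s0: "\<forall>s\<ge>s0. \<forall>e'\<le>Suc e. Hh s e' = HF e'" using H_stab by blast
  have "found s e' = Fl e' (HF e')" if "s \<ge> s0" "e' \<le> e" for s e'
  proof -
    have "Hh s (Suc e') = HF (Suc e')" "Hh s e' = HF e'" using s0 that by auto
    then show ?thesis unfolding found_def using Hh_Suc[of s e'] HF_Suc[of e'] by simp
  qed
  then show ?thesis by blast
qed

lemma HF_sd: "set_decode (HF (Suc e)) = set_decode (HF e) \<union> set_decode (Fl e (HF e))"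
proof (cases "Fl e (HF e) = 0")
  case True then show ?thesis by (simp add: HF_Suc)
next
  case False
  then have "disj (Fl e (HF e)) (HF e)" using Fl_Q by (simp add: Q_def)
  then show ?thesis unfolding HF_Suc disj_iff by (subst sd_add) auto
qed

lemma HF_mono: "e' < e \<Longrightarrow> set_decode (Fl e' (HF e')) \<subseteq> set_decode (HF e)"
proof (induction e)
  case 0 then show ?case by simp
next
  case (Suc e)
  then show ?case using HF_sd[of e] by (auto simp: less_Suc_eq)
qed

lemma HF_mono2: "e' \<le> e \<Longrightarrow> set_decode (HF e') \<subseteq> set_decode (HF e)"
proof (induction e)
  case 0 then show ?case by simp
next
  case (Suc e)
  then show ?case using HF_sd[of e] by (auto simp: le_Suc_eq)
qed


lemma inf_avoid:
  assumes D: "infinite D" "pairwise disjnt D" and A: "finite A"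
  shows "infinite {Y\<in>D. Y \<noteq> {} \<and> Y \<inter> A = {}}"
proof
  assume fin: "finite {Y\<in>D. Y \<noteq> {} \<and> Y \<inter> A = {}}"
  have sub1: "{Y\<in>D. a \<in> Y} \<subseteq> {SOME Y. Y \<in> D \<and> a \<in> Y}" for a
  proof
    fix Y assume Y: "Y \<in> {Y\<in>D. a \<in> Y}"
    then have ex: "\<exists>Y. Y \<in> D \<and> a \<in> Y" by blast
    have "(SOME Y. Y \<in> D \<and> a \<in> Y) \<in> D \<and> a \<in> (SOME Y. Y \<in> D \<and> a \<in> Y)" by (rule someI_ex[OF ex])
    then show "Y \<in> {SOME Y. Y \<in> D \<and> a \<in> Y}"
      using Y D(2) unfolding pairwise_def disjnt_def by blast
  qed
  have "finite {Y\<in>D. a \<in> Y}" for a by (rule finite_subset[OF sub1]) simp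
  then have f2: "finite (\<Union>a\<in>A. {Y\<in>D. a \<in> Y})" using A by blast
  have "D \<subseteq> {Y\<in>D. Y \<noteq> {} \<and> Y \<inter> A = {}} \<union> (\<Union>a\<in>A. {Y\<in>D. a \<in> Y}) \<union> {{}}" by blast
  moreover have "finite ({Y\<in>D. Y \<noteq> {} \<and> Y \<inter> A = {}} \<union> (\<Union>a\<in>A. {Y\<in>D. a \<in> Y}) \<union> {{}})"
    using fin f2 by simp
  ultimately have "finite D" by (rule finite_subset)
  with D(1) show False by simp
qed

lemma inf_big:
  assumes "infinite T" "\<forall>Y\<in>T. finite Y"
  shows "\<exists>Y\<in>T. set_encode Y \<ge> N"
proof (rule ccontr)
  assume "\<not> ?thesis"
  then have "\<forall>Y\<in>T. set_encode Y < N" by auto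
  then have "T \<subseteq> set_decode ` {..<N}" using assms(2) by (auto intro!: image_eqI[of _ set_decode "set_encode _"])
  then have "finite T" by (rule finite_subset) simp
  with assms(1) show False by simp
qed

lemma main_req:
  assumes S: "ce S" and D: "infinite D" "D \<subseteq> set_decode ` S" "pairwise disjnt D"
  shows "\<exists>A \<in> NU (set_decode ` S). \<exists>B \<in> NU (set_decode ` S). col (set_encode A) \<noteq> col (set_encode B)"
proof -
  from ce_check[OF S] obtain e where e: "S = {x. \<exists>p. check e x p}" by blast
  have Dfin: "\<forall>Y\<in>D. finite Y" using D(2) by auto
  \<comment> \<open>the limit found set for e is nonzero\<close>
  have "infinite {Y\<in>D. Y \<noteq> {} \<and> Y \<inter> set_decode (HF e) = {}}"
    by (rule inf_avoid[OF D(1) D(3)]) simp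
  then have "{Y\<in>D. Y \<noteq> {} \<and> Y \<inter> set_decode (HF e) = {}} \<noteq> {}" by (rule infinite_imp_nonempty)
  then obtain Y0 where Y0: "Y0 \<in> D" "Y0 \<noteq> {}" "Y0 \<inter> set_decode (HF e) = {}" by blast
  have "Q e (HF e) (set_encode Y0)"
  proof -
    have fY0: "finite Y0" using Dfin Y0 by auto
    from Y0(1) D(2) obtain y where y: "y \<in> S" "Y0 = set_decode y" by auto
    then have "set_encode Y0 = y" by simp
    then show ?thesis unfolding Q_def disj_iff using y e Y0 fY0 sd_zero_iff by auto
  qed
  then have Fne: "Fl e (HF e) \<noteq> 0" by (rule Fl_ne0)
  define F where "F = Fl e (HF e)"
  have QF: "Q e (HF e) F" using Fl_Q Fne F_def by simp
  have FS: "F \<in> S" using QF e by (auto simp: Q_def)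
  obtain s0 where s0: "\<forall>s\<ge>s0. \<forall>e'\<le>e. found s e' = Fl e' (HF e')" using found_stab by blast
  have "infinite {Y\<in>D. Y \<noteq> {} \<and> Y \<inter> set_decode (HF (Suc e)) = {}}"
    by (rule inf_avoid[OF D(1) D(3)]) simp
  then have "\<exists>Y\<in>{Y\<in>D. Y \<noteq> {} \<and> Y \<inter> set_decode (HF (Suc e)) = {}}. set_encode Y \<ge> s0 + Suc e"
    by (rule inf_big) (use Dfin in auto)
  then obtain Y where Y: "Y \<in> D" "Y \<noteq> {}" "Y \<inter> set_decode (HF (Suc e)) = {}" and Ybig: "set_encode Y \<ge> s0 + Suc e"
    by blast
  have fY: "finite Y" using Dfin Y by auto
  have FsubH: "set_decode F \<subseteq> set_decode (HF (Suc e))" using HF_sd[of e] F_def by auto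
  have FY: "set_decode F \<inter> Y = {}" using FsubH Y(3) by auto
  define Z where "Z = set_decode F \<union> Y"
  have fZ: "finite Z" using fY Z_def by simp
  have z: "set_encode Z = F + set_encode Y"
    unfolding Z_def using enc_union[OF finite_set_decode fY FY] by simp
  define z where "z = set_encode Z"
  have Ypos: "set_encode Y \<noteq> 0" using Y(2) fY by (metis set_encode_inverse set_decode_zero)
  have zbig: "z \<ge> s0" "e < z" using z Ybig unfolding z_def by auto
  have sdz: "set_decode z = Z" using fZ z_def by simp
  have found_e: "found z e = F" using s0 zbig F_def by simp
  have oke: "ok z e"
    unfolding ok_def found_e sub_iff sdz using Fne F_def Ypos z z_def Z_def by auto
  have notok: "\<not> ok z e'" if "e' < e" for e'
  proof
    assume okz: "ok z e'"
    have fe': "found z e' = Fl e' (HF e')" using s0 zbig that by simp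
    have ne: "set_decode (Fl e' (HF e')) \<noteq> {}" using okz fe' by (simp add: ok_def sd_zero_iff)
    have s1: "set_decode (Fl e' (HF e')) \<subseteq> set_decode (HF e)" using HF_mono[OF that] .
    have "set_decode (HF e) \<inter> set_decode F = {}" using QF by (auto simp: Q_def disj_iff)
    moreover have "set_decode (HF e) \<subseteq> set_decode (HF (Suc e))" by (rule HF_mono2) simp
    ultimately have "set_decode (HF e) \<inter> Z = {}" using Y(3) Z_def by auto
    moreover have "set_decode (Fl e' (HF e')) \<subseteq> Z" using okz fe' sdz by (simp add: ok_def sub_iff)
    ultimately show False using ne s1 by auto
  qed
  have least: "(LEAST e'. e' = z \<or> ok z e') = e"
  proof (rule Least_equality)
    show "e = z \<or> ok z e" using oke by simp
  next
    fix y assume "y = z \<or> ok z y"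
    then show "e \<le> y"
    proof
      assume "y = z" then show ?thesis using zbig by simp
    next
      assume "ok z y" then show ?thesis using notok by (cases "y < e") auto
    qed
  qed
  from col_rule[OF zbig(2) oke] have "col z \<noteq> col (z - F)" unfolding least found_e by simp
  moreover have "z - F = set_encode Y" using z z_def by simp
  ultimately have diff: "col (set_encode Z) \<noteq> col (set_encode Y)" using z_def by simp
  have YS: "Y \<in> set_decode ` S" using Y(1) D(2) by blast
  have FS': "set_decode F \<in> set_decode ` S" using FS by blast
  have "Z \<in> NU (set_decode ` S)"
    unfolding NU_def
  proof (intro CollectI conjI exI[of _ "{set_decode F, Y}"])
    show "Z \<noteq> {}" using Y(2) Z_def by simp
    show "finite {set_decode F, Y}" by simp
    show "{set_decode F, Y} \<subseteq> set_decode ` S" using YS FS' by blast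
    show "Z = \<Union> {set_decode F, Y}" using Z_def by simp
  qed
  moreover have "Y \<in> NU (set_decode ` S)"
    unfolding NU_def
  proof (intro CollectI conjI exI[of _ "{Y}"])
    show "Y \<noteq> {}" using Y(2) by simp
    show "finite {Y}" by simp
    show "{Y} \<subseteq> set_decode ` S" using YS by blast
    show "Y = \<Union> {Y}" by simp
  qed
  ultimately show ?thesis using diff by blast
qed

theorem theorem3p1:
  shows "\<exists>c :: nat \<Rightarrow> nat. computable c \<and> (\<forall>x. c x \<in> {0, 1}) \<and>
    (\<forall>S :: nat set. ce S \<and>
        (\<exists>D. infinite D \<and> D \<subseteq> set_decode ` S \<and> pairwise disjnt D) \<longrightarrow>
      (\<exists>A \<in> NU (set_decode ` S). \<exists>B \<in> NU (set_decode ` S).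
          c (set_encode A) \<noteq> c (set_encode B)))"
proof (intro exI[of _ col] conjI allI impI)
  show "computable col"
  proof -
    from cf_col obtain g where g: "recfn 1 g" "\<forall>xs. length xs = 1 \<longrightarrow> col (hd xs) = g xs"
      unfolding cf_def rf_def by blast
    have "col x = g [x]" for x using g(2)[rule_format, of "[x]"] by simp
    then show ?thesis unfolding computable_def using g(1) by blast
  qed
next
  fix x show "col x \<in> {0, 1}" using col_01[of x] by auto
next
  fix S :: "nat set"
  assume "ce S \<and> (\<exists>D. infinite D \<and> D \<subseteq> set_decode ` S \<and> pairwise disjnt D)"
  then show "\<exists>A \<in> NU (set_decode ` S). \<exists>B \<in> NU (set_decode ` S). col (set_encode A) \<noteq> col (set_encode B)"
    using main_req by blast
qed


end
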